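(* Let $\mathbf{w}$ be a Sturmian word over $\{0,1\}$ and $k \in \mathbb{N}$. (1) Let $\mathbf{u} = \varphi_b^k(\mathbf{w})$. Then $0^k$ is a bispecial prefix of $\mathbf{u}$ and $\mathbf{d}_{\mathbf{u}}(0^k) = \mathbf{w}$ (up to a permutation of letters). (2) If $1\mathbf{w}$ is a Sturmian word, then $\varphi_a^k(1\mathbf{w}) = 1\varphi_b^k(\mathbf{w})$.
   Context: The morphisms on $\{0,1\}^*$ are $\varphi_a: 0 \mapsto 0, 1 \mapsto 10$ and $\varphi_b: 0 \mapsto 0, 1 \mapsto 01$, extended to infinite words letterwise. A Sturmian word is an infinite binary word having exactly $n+1$ factors of length $n$ for every $n$. A factor $v$ of $\mathbf{u}$ is right (left) special if $va, vb$ (resp. $av, bv$) are factors for two distinct letters $a \ne b$; bispecial if both. Derived word: for a uniformly recurrent word $\mathbf{u}$ and a factor $v$, a return word of $v$ is a factor $r$ such that $rv$ is a factor of $\mathbf{u}$ in which $v$ occurs exactly twice, as a prefix and as a suffix. If $r_0, \dots, r_k$ are all the return words of $v$, write $\mathbf{u} = p\, r_{s_0} r_{s_1} r_{s_2}\cdots$ where $|p|$ is the first occurrence of $v$ in $\mathbf{u}$; then $\mathbf{d}_{\mathbf{u}}(v) = s_0 s_1 s_2 \cdots$. Derived words are considered up to a permutation of letters; the derived word to the empty word is $\mathbf{u}$ itself. *)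

theory Defs
  imports Main "HOL-Library.Infinite_Set"
begin

definition fac :: "(nat \<Rightarrow> 'a) \<Rightarrow> nat \<Rightarrow> nat \<Rightarrow> 'a list" where
  "fac u i n = map u [i..<i+n]"

definition is_factor :: "'a list \<Rightarrow> (nat \<Rightarrow> 'a) \<Rightarrow> bool" where
  "is_factor v u \<longleftrightarrow> (\<exists>i. fac u i (length v) = v)"

definition sturmian :: "(nat \<Rightarrow> nat) \<Rightarrow> bool" where
  "sturmian u \<longleftrightarrow> range u \<subseteq> {0, 1} \<and>
     (\<forall>n. card {v. is_factor v u \<and> length v = n} = n + 1)"

fun phi_a :: "nat \<Rightarrow> nat list" where
  "phi_a 0 = [0]"
| "phi_a (Suc 0) = [1, 0]"
| "phi_a n = [n]"

fun phi_b :: "nat \<Rightarrow> nat list" where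
  "phi_b 0 = [0]"
| "phi_b (Suc 0) = [0, 1]"
| "phi_b n = [n]"

text \<open>Letterwise extension of a non-erasing morphism to infinite words:
  position p of the image is read off the concatenation of the images of the
  first p+1 letters (which has length at least p+1).\<close>
definition morph_inf :: "(nat \<Rightarrow> nat list) \<Rightarrow> (nat \<Rightarrow> nat) \<Rightarrow> (nat \<Rightarrow> nat)" where
  "morph_inf f w = (\<lambda>p. concat (map (f \<circ> w) [0..<Suc p]) ! p)"

definition right_special :: "nat list \<Rightarrow> (nat \<Rightarrow> nat) \<Rightarrow> bool" where
  "right_special v u \<longleftrightarrow> (\<exists>a b. a \<noteq> b \<and> is_factor (v @ [a]) u \<and> is_factor (v @ [b]) u)"

definition left_special :: "nat list \<Rightarrow> (nat \<Rightarrow> nat) \<Rightarrow> bool" where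
  "left_special v u \<longleftrightarrow> (\<exists>a b. a \<noteq> b \<and> is_factor (a # v) u \<and> is_factor (b # v) u)"

definition bispecial :: "nat list \<Rightarrow> (nat \<Rightarrow> nat) \<Rightarrow> bool" where
  "bispecial v u \<longleftrightarrow> right_special v u \<and> left_special v u"

definition occurrences :: "nat list \<Rightarrow> nat list \<Rightarrow> nat set" where
  "occurrences v x = {i. i + length v \<le> length x \<and> take (length v) (drop i x) = v}"

definition return_word :: "(nat \<Rightarrow> nat) \<Rightarrow> nat list \<Rightarrow> nat list \<Rightarrow> bool" where
  "return_word u v r \<longleftrightarrow> is_factor (r @ v) u \<and> occurrences v (r @ v) = {0, length r}
     \<and> card (occurrences v (r @ v)) = 2"

definition occ :: "(nat \<Rightarrow> nat) \<Rightarrow> nat list \<Rightarrow> nat \<Rightarrow> nat" where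
  "occ u v j = enumerate {i. fac u i (length v) = v} j"

text \<open>Derived word of u to v, written over the alphabet of return words:
  u = p r_{s_0} r_{s_1} ..., the j-th letter is the return word r_{s_j}.\<close>
definition derived :: "(nat \<Rightarrow> nat) \<Rightarrow> nat list \<Rightarrow> (nat \<Rightarrow> nat list)" where
  "derived u v = (\<lambda>j. fac u (occ u v j) (occ u v (Suc j) - occ u v j))"

definition equal_upto_perm :: "(nat \<Rightarrow> 'a) \<Rightarrow> (nat \<Rightarrow> 'b) \<Rightarrow> bool" where
  "equal_upto_perm x y \<longleftrightarrow> (\<exists>\<pi>. inj_on \<pi> (range x) \<and> (\<forall>n. y n = \<pi> (x n)))"

end

theory Submission
  imports Defs
begin

definition pref :: "'a list \<Rightarrow> (nat \<Rightarrow> 'a) \<Rightarrow> bool" where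
  "pref xs u \<longleftrightarrow> (\<forall>i<length xs. u i = xs ! i)"

definition CC :: "(nat \<Rightarrow> nat list) \<Rightarrow> (nat \<Rightarrow> nat) \<Rightarrow> nat \<Rightarrow> nat list" where
  "CC f w n = concat (map (f \<circ> w) [0..<n])"

definition pp :: "'a list \<Rightarrow> (nat \<Rightarrow> 'a) \<Rightarrow> (nat \<Rightarrow> 'a)" where
  "pp xs u = (\<lambda>i. if i < length xs then xs ! i else u (i - length xs))"

lemma CC_0[simp]: "CC f w 0 = []" by (simp add: CC_def)
lemma CC_Suc: "CC f w (Suc n) = CC f w n @ f (w n)" by (simp add: CC_def)

lemma len_CC: "(\<forall>x. f x \<noteq> []) \<Longrightarrow> n \<le> length (CC f w n)"
proof (induction n)
  case (Suc n)
  then have "f (w n) \<noteq> []" by blast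
  then have "length (f (w n)) \<ge> 1" by (cases "f (w n)") auto
  with Suc show ?case by (simp add: CC_Suc)
qed simp

lemma CC_mono: "m \<le> n \<Longrightarrow> \<exists>zs. CC f w n = CC f w m @ zs"
proof (induction n)
  case (Suc n)
  show ?case
  proof (cases "m = Suc n")
    case False
    with Suc obtain zs where "CC f w n = CC f w m @ zs" by fastforce
    then show ?thesis by (auto simp: CC_Suc)
  qed simp
qed simp

lemma morph_pref:
  assumes ne: "\<forall>x. f x \<noteq> []"
  shows "pref (CC f w n) (morph_inf f w)"
  unfolding pref_def
proof (intro allI impI)
  fix i assume i: "i < length (CC f w n)"
  have mi: "morph_inf f w i = CC f w (Suc i) ! i" by (simp add: morph_inf_def CC_def)
  have li: "i < length (CC f w (Suc i))" using len_CC[OF ne, of "Suc i" w] by simp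
  show "morph_inf f w i = CC f w n ! i"
  proof (cases "Suc i \<le> n")
    case True
    then obtain zs where "CC f w n = CC f w (Suc i) @ zs" using CC_mono by blast
    then show ?thesis using mi li by (simp add: nth_append)
  next
    case False
    then obtain zs where "CC f w (Suc i) = CC f w n @ zs" using CC_mono[of n "Suc i"] by auto
    then show ?thesis using mi i by (simp add: nth_append)
  qed
qed

lemma morph_unique:
  assumes ne: "\<forall>x. f x \<noteq> []" and h: "\<forall>n. pref (CC f w n) u"
  shows "u = morph_inf f w"
proof
  fix p
  have li: "p < length (CC f w (Suc p))" using len_CC[OF ne, of "Suc p" w] by simp
  then have "u p = CC f w (Suc p) ! p" using h by (simp add: pref_def)
  also have "\<dots> = morph_inf f w p" by (simp add: morph_inf_def CC_def)
  finally show "u p = morph_inf f w p" .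
qed

lemma morph_cong: "(\<forall>i. f (w i) = g (w' i)) \<Longrightarrow> morph_inf f w = morph_inf g w'"
  unfolding morph_inf_def by (simp cong: map_cong)

lemma concat_map_concat:
  "concat (map (\<lambda>i. concat (map f (g (w i)))) xs) = concat (map f (concat (map (g \<circ> w) xs)))"
  by (induction xs) auto

lemma pref_eq_map:
  assumes "pref xs u" shows "xs = map u [0..<length xs]"
  using assms by (auto simp: pref_def intro: nth_equalityI)

lemma morph_comp:
  assumes nf: "\<forall>x. f x \<noteq> []" and ng: "\<forall>x. g x \<noteq> []"
  shows "morph_inf f (morph_inf g w) = morph_inf (\<lambda>x. concat (map f (g x))) w"
proof (rule morph_unique)
  show "\<forall>x. concat (map f (g x)) \<noteq> []"
  proof
    fix x
    obtain a r where "g x = a # r" using ng by (cases "g x") auto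
    then show "concat (map f (g x)) \<noteq> []" using nf by auto
  qed
  show "\<forall>n. pref (CC (\<lambda>x. concat (map f (g x))) w n) (morph_inf f (morph_inf g w))"
  proof
    fix n
    let ?w' = "morph_inf g w"
    let ?L = "length (CC g w n)"
    have e1: "CC (\<lambda>x. concat (map f (g x))) w n = concat (map f (CC g w n))"
      unfolding CC_def using concat_map_concat[of f g w] by (simp add: o_def)
    have e2: "CC g w n = map ?w' [0..<?L]" using pref_eq_map[OF morph_pref[OF ng]] by blast
    have "concat (map f (CC g w n)) = CC f ?w' ?L"
      by (subst e2) (simp add: CC_def o_def)
    then show "pref (CC (\<lambda>x. concat (map f (g x))) w n) (morph_inf f ?w')"
      using e1 morph_pref[OF nf] by simp
  qed
qed

lemma phi_a_ne: "phi_a x \<noteq> []" by (cases x rule: phi_a.cases) auto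
lemma phi_b_ne: "phi_b x \<noteq> []" by (cases x rule: phi_b.cases) auto

definition hb :: "nat \<Rightarrow> nat \<Rightarrow> nat list" where
  "hb k x = (if x = 0 then [0] else replicate k 0 @ [1])"

lemma hb_ne: "hb k x \<noteq> []" by (simp add: hb_def)

lemma morph_id: "morph_inf (\<lambda>x. [x]) w = w"
proof (rule morph_unique[symmetric])
  show "\<forall>n. pref (CC (\<lambda>x. [x]) w n) w"
    by (auto simp: pref_def CC_def map_concat o_def)
qed simp

lemma morph_range:
  assumes "\<forall>i. set (f (w i)) \<subseteq> A" "\<forall>x. f x \<noteq> []"
  shows "morph_inf f w p \<in> A"
proof -
  have li: "p < length (CC f w (Suc p))" using len_CC[OF assms(2), of "Suc p" w] by simp
  have "morph_inf f w p = CC f w (Suc p) ! p" by (simp add: morph_inf_def CC_def)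
  also have "\<dots> \<in> set (CC f w (Suc p))" using li by simp
  finally show ?thesis using assms(1) by (auto simp: CC_def)
qed

lemma iter_b:
  assumes bin: "\<forall>i. w i \<in> {0,1}"
  shows "(morph_inf phi_b ^^ k) w = morph_inf (hb k) w"
proof (induction k)
  case 0
  have "morph_inf (hb 0) w = morph_inf (\<lambda>x. [x]) w"
  proof (intro morph_cong allI)
    fix i have "w i = 0 \<or> w i = 1" using bin by auto
    then show "hb 0 (w i) = [w i]" by (auto simp: hb_def)
  qed
  then show ?case by (simp add: morph_id)
next
  case (Suc k)
  have "(morph_inf phi_b ^^ Suc k) w = morph_inf phi_b (morph_inf (hb k) w)"
    using Suc by simp
  also have "\<dots> = morph_inf (\<lambda>x. concat (map phi_b (hb k x))) w"
    by (rule morph_comp) (auto simp: phi_b_ne hb_ne)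
  also have "\<dots> = morph_inf (hb (Suc k)) w"
  proof (rule morph_cong, rule allI)
    fix i
    have "concat (map phi_b (replicate k 0)) = replicate k 0" by (induction k) auto
    then show "concat (map phi_b (hb k (w i))) = hb (Suc k) (w i)"
      using bin[rule_format, of i] by (auto simp: hb_def replicate_append_same)
  qed
  finally show ?case .
qed

lemma iter_b_bin:
  assumes bin: "\<forall>i. w i \<in> {0,1}"
  shows "\<forall>i. (morph_inf phi_b ^^ k) w i \<in> {0,1}"
proof
  fix i
  have "\<forall>i. set (hb k (w i)) \<subseteq> {0,1}" by (auto simp: hb_def)
  then have "morph_inf (hb k) w i \<in> {0,1}" by (rule morph_range) (simp add: hb_ne)
  then show "(morph_inf phi_b ^^ k) w i \<in> {0,1}" using iter_b[OF bin] by simp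
qed

lemma CC_cons: "CC f (case_nat a y) (Suc n) = f a @ CC f y n"
proof (induction n)
  case (Suc n)
  then show ?case by (simp add: CC_Suc)
qed (simp add: CC_Suc)

lemma pref_pp: "pref ys u \<Longrightarrow> pref (xs @ ys) (pp xs u)"
  by (auto simp: pref_def pp_def nth_append)

lemma pref_append: "pref (xs @ ys) u \<Longrightarrow> pref xs u"
  by (auto simp: pref_def nth_append)

lemma morph_cons:
  assumes ne: "\<forall>x. f x \<noteq> []"
  shows "morph_inf f (case_nat a y) = pp (f a) (morph_inf f y)"
proof (rule morph_unique[OF ne, symmetric], rule allI)
  fix n
  show "pref (CC f (case_nat a y) n) (pp (f a) (morph_inf f y))"
  proof (cases n)
    case 0 then show ?thesis by (simp add: pref_def)
  next
    case (Suc m)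
    then show ?thesis using CC_cons pref_pp[OF morph_pref[OF ne]] by metis
  qed
qed

lemma CC_ab:
  assumes bin: "\<forall>i. y i \<in> {0,1}"
  shows "CC phi_b y n @ [0] = 0 # CC phi_a y n"
proof (induction n)
  case (Suc n)
  have e: "phi_b (y n) @ [0] = 0 # phi_a (y n)" using bin[rule_format, of n] by auto
  have "CC phi_b y (Suc n) @ [0] = CC phi_b y n @ (phi_b (y n) @ [0])" by (simp add: CC_Suc)
  also have "\<dots> = (CC phi_b y n @ [0]) @ phi_a (y n)" using e by simp
  also have "\<dots> = 0 # CC phi_a y (Suc n)" using Suc by (simp add: CC_Suc)
  finally show ?case .
qed simp

lemma morph_ba:
  assumes bin: "\<forall>i. y i \<in> {0,1}"
  shows "morph_inf phi_b y = pp [0] (morph_inf phi_a y)"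
proof (rule morph_unique[symmetric], simp add: phi_b_ne, rule allI)
  fix n
  have "pref ([0] @ CC phi_a y n) (pp [0] (morph_inf phi_a y))"
    by (rule pref_pp[OF morph_pref]) (simp add: phi_a_ne)
  then have "pref (CC phi_b y n @ [0]) (pp [0] (morph_inf phi_a y))"
    using CC_ab[OF bin, of n] by simp
  then show "pref (CC phi_b y n) (pp [0] (morph_inf phi_a y))" by (rule pref_append)
qed

lemma phi_ab:
  assumes bin: "\<forall>i. y i \<in> {0,1}"
  shows "morph_inf phi_a (case_nat 1 y) = case_nat 1 (morph_inf phi_b y)"
proof -
  have "morph_inf phi_a (case_nat 1 y) = pp [1,0] (morph_inf phi_a y)"
    using morph_cons[of phi_a 1 y] by (simp add: phi_a_ne)
  also have "\<dots> = case_nat 1 (pp [0] (morph_inf phi_a y))"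
  proof
    fix i show "pp [1, 0] (morph_inf phi_a y) i = case_nat 1 (pp [0] (morph_inf phi_a y)) i"
      by (cases i) (auto simp: pp_def nth_Cons split: nat.split)
  qed
  finally show ?thesis using morph_ba[OF bin] by simp
qed

lemma part2:
  assumes bin: "\<forall>i. w i \<in> {0,1}"
  shows "(morph_inf phi_a ^^ k) (case_nat 1 w) = case_nat 1 ((morph_inf phi_b ^^ k) w)"
proof (induction k)
  case (Suc k)
  have "(morph_inf phi_a ^^ Suc k) (case_nat 1 w) = morph_inf phi_a ((morph_inf phi_a ^^ k) (case_nat 1 w))" by simp
  also have "\<dots> = morph_inf phi_a (case_nat 1 ((morph_inf phi_b ^^ k) w))" using Suc.IH by (rule arg_cong)
  also have "\<dots> = case_nat 1 (morph_inf phi_b ((morph_inf phi_b ^^ k) w))"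
    by (rule phi_ab[OF iter_b_bin[OF bin]])
  also have "\<dots> = case_nat 1 ((morph_inf phi_b ^^ Suc k) w)"
    by (simp only: funpow.simps o_apply)
  finally show ?case .
qed (simp only: funpow_0)



lemma fac_eq_iff: "fac u i n = xs \<longleftrightarrow> length xs = n \<and> (\<forall>t<n. u (i + t) = xs ! t)"
  unfolding fac_def by (auto simp: list_eq_iff_nth_eq)

lemma enum_range:
  "strict_mono (P :: nat \<Rightarrow> nat) \<Longrightarrow> enumerate (range P) n = P n"
proof (induction n arbitrary: P)
  case 0
  have "(LEAST n. n \<in> range P) = P 0"
    by (rule Least_equality) (auto simp: strict_mono_less_eq[OF 0])
  then show ?case by (simp add: enumerate_0)
next
  case (Suc n)
  have l: "(LEAST n. n \<in> range P) = P 0"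
    by (rule Least_equality) (auto simp: strict_mono_less_eq[OF Suc.prems])
  have r: "range P - {P 0} = range (P \<circ> Suc)"
  proof
    show "range P - {P 0} \<subseteq> range (P \<circ> Suc)"
    proof
      fix x assume "x \<in> range P - {P 0}"
      then obtain j where "x = P j" "j \<noteq> 0" by auto
      then show "x \<in> range (P \<circ> Suc)" by (cases j) auto
    qed
    show "range (P \<circ> Suc) \<subseteq> range P - {P 0}"
      using Suc.prems by (auto simp: strict_mono_eq)
  qed
  have sm: "strict_mono (P \<circ> Suc)" using Suc.prems by (auto simp: strict_mono_def)
  show ?case using Suc.IH[OF sm] by (simp add: enumerate_Suc l r)
qed

locale blk =
  fixes w :: "nat \<Rightarrow> nat" and k :: nat
  assumes bin: "\<forall>i. w i \<in> {0,1}"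
begin

definition u where "u = morph_inf (hb k) w"
definition P where "P j = length (CC (hb k) w j)"

lemma P_Suc: "P (Suc j) = P j + length (hb k (w j))"
  by (simp add: P_def CC_Suc)

lemma P_0: "P 0 = 0" by (simp add: P_def)

lemma sm: "strict_mono P"
  unfolding strict_mono_Suc_iff by (simp add: P_Suc hb_def)

lemma key: "t < length (hb k (w j)) \<Longrightarrow> u (P j + t) = hb k (w j) ! t"
proof -
  assume t: "t < length (hb k (w j))"
  have "pref (CC (hb k) w (Suc j)) u" unfolding u_def by (rule morph_pref) (simp add: hb_ne)
  then show ?thesis using t by (simp add: pref_def CC_Suc P_def nth_append)
qed

lemma zeros: "t < k \<Longrightarrow> u (P j + t) = 0"
proof (induction t arbitrary: j)
  case 0
  show ?case using key[of 0 j] 0 by (cases k) (auto simp: hb_def)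
next
  case (Suc t)
  show ?case
  proof (cases "w j = 0")
    case True
    then have h: "P j + Suc t = P (Suc j) + t" by (simp add: P_Suc hb_def)
    show ?thesis unfolding h using Suc.IH Suc.prems by simp
  next
    case False
    then show ?thesis using key[of "Suc t" j] Suc.prems by (simp add: hb_def nth_append)
  qed
qed

lemma fac_P: "fac u (P j) k = replicate k 0"
  by (simp add: fac_eq_iff zeros)

lemma block: "fac u (P j) (length (hb k (w j))) = hb k (w j)"
  by (simp add: fac_eq_iff key)

lemma interval: "\<exists>j. P j \<le> i \<and> i < P (Suc j)"
proof (induction i)
  case 0 show ?case using sm P_0 by (metis le0 lessI strict_mono_less)
next
  case (Suc i)
  then obtain j where j: "P j \<le> i" "i < P (Suc j)" by blast
  show ?case
  proof (cases "Suc i < P (Suc j)")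
    case True then show ?thesis using j by (intro exI[of _ j]) auto
  next
    case False
    then have "Suc i = P (Suc j)" using j by auto
    then show ?thesis using sm by (intro exI[of _ "Suc j"]) (auto simp: strict_mono_less)
  qed
qed

lemma occ_set: "{i. fac u i k = replicate k 0} = range P"
proof
  show "range P \<subseteq> {i. fac u i k = replicate k 0}" using fac_P by auto
  show "{i. fac u i k = replicate k 0} \<subseteq> range P"
  proof
    fix i assume "i \<in> {i. fac u i k = replicate k 0}"
    then have f: "\<forall>t<k. u (i + t) = 0" by (simp add: fac_eq_iff)
    obtain j where j: "P j \<le> i" "i < P (Suc j)" using interval by blast
    show "i \<in> range P"
    proof (rule ccontr)
      assume "i \<notin> range P"
      then have ne: "i \<noteq> P j" by auto
      then have "w j \<noteq> 0" using j by (cases "w j = 0") (auto simp: P_Suc hb_def)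
      then have hw: "hb k (w j) = replicate k 0 @ [1]" by (simp add: hb_def)
      have ik: "i \<le> P j + k" using j hw by (simp add: P_Suc)
      have "u (P j + k) = 1" using key[of k j] hw by (simp add: nth_append)
      moreover have "P j + k = i + (P j + k - i)" using ik by simp
      moreover have "P j + k - i < k" using ne j ik by auto
      moreover have "u (i + (P j + k - i)) = 0" using f \<open>P j + k - i < k\<close> by blast
      ultimately show False by simp
    qed
  qed
qed

lemma occ_eq: "occ u (replicate k 0) j = P j"
  unfolding occ_def by (simp add: occ_set enum_range[OF sm])

lemma derived_eq: "derived u (replicate k 0) j = hb k (w j)"
  unfolding derived_def occ_eq using block by (simp add: P_Suc)

end

lemma sturm_ex: "sturmian w \<Longrightarrow> \<exists>j. w j \<noteq> c"
proof (rule ccontr)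
  assume s: "sturmian w" and "\<not> (\<exists>j. w j \<noteq> c)"
  then have c: "\<forall>j. w j = c" by auto
  have "{v. is_factor v w \<and> length v = 1} \<subseteq> {[c]}"
  proof
    fix v assume "v \<in> {v. is_factor v w \<and> length v = 1}"
    then obtain i where "fac w i 1 = v" "length v = 1" by (auto simp: is_factor_def)
    then show "v \<in> {[c]}" using c by (auto simp: fac_def)
  qed
  then have "card {v. is_factor v w \<and> length v = 1} \<le> card {[c]}"
    by (intro card_mono) auto
  then show False using s by (simp add: sturmian_def)
qed

theorem corollary16:
  fixes w :: "nat \<Rightarrow> nat" and k :: nat
  assumes "sturmian w"
  shows "(let u = (morph_inf phi_b ^^ k) w in
            fac u 0 k = replicate k 0 \<and> bispecial (replicate k 0) u
            \<and> equal_upto_perm (derived u (replicate k 0)) w)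
         \<and> (sturmian (case_nat 1 w) \<longrightarrow>
            (morph_inf phi_a ^^ k) (case_nat 1 w) = case_nat 1 ((morph_inf phi_b ^^ k) w))"
proof -
  have bin: "\<forall>i. w i \<in> {0,1}" using assms by (auto simp: sturmian_def)
  interpret blk w k by standard (rule bin)
  obtain j0 where "w j0 \<noteq> 1" using sturm_ex[OF assms, of 1] by auto
  then have j0: "w j0 = 0" using bin[rule_format, of j0] by auto
  obtain j1 where "w j1 \<noteq> 0" using sturm_ex[OF assms, of 0] by auto
  then have j1: "w j1 = 1" using bin[rule_format, of j1] by auto
  have ue: "(morph_inf phi_b ^^ k) w = u" using iter_b[OF bin] by (simp add: u_def)
  have pre: "fac u 0 k = replicate k 0" using fac_P[of 0] by (simp add: P_0)
  have f1: "is_factor (replicate k 0 @ [1]) u"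
    using block[of j1] j1 unfolding is_factor_def by (auto simp: hb_def)
  have f0: "is_factor (0 # replicate k 0) u"
  proof -
    have "fac u (P j0) (Suc k) = 0 # replicate k 0"
    proof (unfold fac_eq_iff, intro conjI allI impI)
      fix t assume t: "t < Suc k"
      show "u (P j0 + t) = (0 # replicate k 0) ! t"
      proof (cases t)
        case 0 then show ?thesis using key[of 0 j0] j0 by (simp add: hb_def)
      next
        case (Suc s)
        then have h: "P j0 + t = P (Suc j0) + s" using j0 by (simp add: P_Suc hb_def)
        show ?thesis unfolding h using zeros[of s "Suc j0"] t Suc by simp
      qed
    qed simp
    then show ?thesis unfolding is_factor_def by (metis length_Cons length_replicate)
  qed
  have f2: "is_factor (1 # replicate k 0) u"
  proof -
    have hw: "hb k (w j1) = replicate k 0 @ [1]" using j1 by (simp add: hb_def)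
    have "fac u (P j1 + k) (Suc k) = 1 # replicate k 0"
    proof (unfold fac_eq_iff, intro conjI allI impI)
      fix t assume t: "t < Suc k"
      show "u (P j1 + k + t) = (1 # replicate k 0) ! t"
      proof (cases t)
        case 0 then show ?thesis using key[of k j1] hw by (simp add: nth_append)
      next
        case (Suc s)
        then have h: "P j1 + k + t = P (Suc j1) + s" using hw by (simp add: P_Suc)
        show ?thesis unfolding h using zeros[of s "Suc j1"] t Suc by simp
      qed
    qed simp
    then show ?thesis unfolding is_factor_def by (metis length_Cons length_replicate)
  qed
  have bs: "bispecial (replicate k 0) u"
    unfolding bispecial_def right_special_def left_special_def
  proof (intro conjI)
    show "\<exists>a b. a \<noteq> b \<and> is_factor (replicate k 0 @ [a]) u \<and> is_factor (replicate k 0 @ [b]) u"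
      using f0 f1 by (intro exI[of _ 0] exI[of _ 1]) (simp add: replicate_append_same)
    show "\<exists>a b. a \<noteq> b \<and> is_factor (a # replicate k 0) u \<and> is_factor (b # replicate k 0) u"
      using f0 f2 by (intro exI[of _ 0] exI[of _ 1]) simp
  qed
  have ep: "equal_upto_perm (derived u (replicate k 0)) w"
    unfolding equal_upto_perm_def
  proof (intro exI[of _ "\<lambda>l. if l = [0] then 0 else 1"] conjI allI)
    have ne: "replicate k 0 @ [1] \<noteq> [0::nat]" by (cases k) auto
    have "range (derived u (replicate k 0)) \<subseteq> {[0], replicate k 0 @ [1]}"
      by (auto simp: derived_eq hb_def)
    then show "inj_on (\<lambda>l. if l = [0::nat] then 0::nat else 1) (range (derived u (replicate k 0)))"
    proof (intro inj_onI)
      fix x y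
      assume sub: "range (derived u (replicate k 0)) \<subseteq> {[0], replicate k 0 @ [1]}"
        and x: "x \<in> range (derived u (replicate k 0))" and y: "y \<in> range (derived u (replicate k 0))"
        and e: "(if x = [0::nat] then 0::nat else 1) = (if y = [0] then 0 else 1)"
      have x2: "x = [0] \<or> x = replicate k 0 @ [1]" using sub x by blast
      have y2: "y = [0] \<or> y = replicate k 0 @ [1]" using sub y by blast
      show "x = y"
      proof (cases "x = [0]")
        case True
        then have "y = [0]" using e by (cases "y = [0]") simp_all
        then show ?thesis using True by simp
      next
        case False
        then have "y \<noteq> [0]" using e by (cases "y = [0]") simp_all
        then show ?thesis using False x2 y2 by blast
      qed
    qed
    fix n
    show "w n = (if derived u (replicate k 0) n = [0] then 0 else 1)"
      using bin[rule_format, of n] ne by (auto simp: derived_eq hb_def)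
  qed
  show ?thesis using pre bs ep part2[OF bin, of k] by (simp add: ue Let_def)
qed

end
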